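(* Let $0<p<1$, $q=1-p$, let $\{X_i,i\geq 1\}$ be independent with $P\{X_i=1\}=p$, $P\{X_i=0\}=q$, and write $\lambda=1/\sqrt{pq}$. Let $\varepsilon>0$. Then for almost all $\omega$ there exists an infinite sequence of integers $N_i=N_i(\omega,\varepsilon)$, $i=1,2,\ldots$, such that $$M_{N_i}<\left\lfloor \log_{\lambda} N_i-\log_{\lambda}\log_{\lambda}\log_{\lambda} N_i+\log_{\lambda}\log_{\lambda} e+1+\varepsilon\right\rfloor .$$
   Context: For $m,n\in\mathbb N$ let $S_n^{(m)}:=\sum_{i=m+1}^{n+m-1}\big[(1-X_{i-1})X_i+X_{i-1}(1-X_i)\big]$ be the number of switches among $X_m,\ldots,X_{m+n-1}$. For $m,N\in\mathbb N$ and $n=1,\ldots,N$ let $H_{m,n}^{(N)}:=\bigcup_{i=m}^{m+N-n+1}\{S_n^{(i)}=n-1\}$, and $M_N^{(m)}:=\max_{1\leq n\leq N}\{n-1 : H_{m,n}^{(N)}\neq\emptyset\}$ (length of the longest consecutive switches in $X_m,\ldots,X_{m+N-1}$). Write $M_N:=M_N^{(1)}$. *)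

theory Defs
  imports "HOL-Probability.Probability"
begin

definition switches :: "(nat \<Rightarrow> 'a \<Rightarrow> real) \<Rightarrow> nat \<Rightarrow> nat \<Rightarrow> 'a \<Rightarrow> real" where
  "switches X n m \<omega> =
     (\<Sum>i = m+1..n+m-1. (1 - X (i-1) \<omega>) * X i \<omega> + X (i-1) \<omega> * (1 - X i \<omega>))"

definition in_H :: "(nat \<Rightarrow> 'a \<Rightarrow> real) \<Rightarrow> nat \<Rightarrow> nat \<Rightarrow> nat \<Rightarrow> 'a \<Rightarrow> bool" where
  "in_H X N m n \<omega> \<longleftrightarrow> (\<exists>i \<in> {m..m+N-n+1}. switches X n i \<omega> = real n - 1)"

definition longest_switch :: "(nat \<Rightarrow> 'a \<Rightarrow> real) \<Rightarrow> nat \<Rightarrow> nat \<Rightarrow> 'a \<Rightarrow> nat" where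
  "longest_switch X m N \<omega> = Max {n - 1 | n. 1 \<le> n \<and> n \<le> N \<and> in_H X N m n \<omega>}"

definition M_N :: "(nat \<Rightarrow> 'a \<Rightarrow> real) \<Rightarrow> nat \<Rightarrow> 'a \<Rightarrow> nat" where
  "M_N X N \<omega> = longest_switch X 1 N \<omega>"

end

theory Submission
  imports Defs
begin

locale sw = prob_space M for M :: "'a measure" +
  fixes X :: "nat \<Rightarrow> 'a \<Rightarrow> real" and p :: real
  assumes p0: "0 < p" and p1: "p < 1"
    and Xmeas: "\<And>i. i \<ge> 1 \<Longrightarrow> X i \<in> borel_measurable M"
    and Xind: "indep_vars (\<lambda>_. borel) X {1..}"
    and P1: "\<And>i. i \<ge> 1 \<Longrightarrow> prob {\<omega> \<in> space M. X i \<omega> = 1} = p"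
    and P0: "\<And>i. i \<ge> 1 \<Longrightarrow> prob {\<omega> \<in> space M. X i \<omega> = 0} = 1 - p"
begin

definition Z :: "nat \<Rightarrow> 'a \<Rightarrow> bool" where "Z i \<omega> = (X i \<omega> = 1)"

lemma Zind: "indep_vars (\<lambda>_. count_space UNIV) Z {1..}"
proof -
  have "indep_vars (\<lambda>_. count_space UNIV) (\<lambda>i x. (\<lambda>y::real. y = 1) (X i x)) {1..}"
    by (rule indep_vars_compose2[OF Xind]) measurable
  then show ?thesis by (simp add: Z_def[abs_def])
qed

lemma finite_PiM_sets:
  assumes "finite K"
  shows "{y \<in> space (PiM K (\<lambda>_. count_space (UNIV::bool set))). P y} \<in> sets (PiM K (\<lambda>_. count_space UNIV))"
proof -
  let ?S = "{y \<in> space (PiM K (\<lambda>_. count_space (UNIV::bool set))). P y}"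
  have sp: "space (PiM K (\<lambda>_. count_space (UNIV::bool set))) = PiE K (\<lambda>_. UNIV)"
    by (simp add: space_PiM)
  have f0: "finite (PiE K (\<lambda>_. UNIV::bool set))" using assms by (simp add: finite_PiE)
  have sub: "?S \<subseteq> PiE K (\<lambda>_. UNIV)" unfolding sp by blast
  have fin: "finite ?S" by (rule finite_subset[OF sub f0])
  have eq: "?S = (\<Union>y\<in>?S. PiE K (\<lambda>i. {y i}))"
  proof (rule equalityI)
    show "?S \<subseteq> (\<Union>y\<in>?S. PiE K (\<lambda>i. {y i}))"
    proof (rule subsetI)
      fix y assume y: "y \<in> ?S"
      then have "y \<in> extensional K" using sub by (auto simp: PiE_def)
      then have "y \<in> PiE K (\<lambda>i. {y i})" by (simp add: PiE_def)
      then show "y \<in> (\<Union>y\<in>?S. PiE K (\<lambda>i. {y i}))" using y by blast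
    qed
    show "(\<Union>y\<in>?S. PiE K (\<lambda>i. {y i})) \<subseteq> ?S"
    proof (rule subsetI)
      fix z assume "z \<in> (\<Union>y\<in>?S. PiE K (\<lambda>i. {y i}))"
      then obtain y where y: "y \<in> ?S" and z: "z \<in> PiE K (\<lambda>i. {y i})" by blast
      have ey: "y \<in> extensional K" using y sub by (auto simp: PiE_def)
      have ez: "z \<in> extensional K" and zi: "\<And>i. i \<in> K \<Longrightarrow> z i = y i" using z by (auto simp: PiE_def Pi_def)
      have "z = y" by (rule extensionalityI[OF ez ey zi])
      then show "z \<in> ?S" using y by simp
    qed
  qed
  have "\<And>y. y \<in> ?S \<Longrightarrow> PiE K (\<lambda>i. {y i}) \<in> sets (PiM K (\<lambda>_. count_space (UNIV::bool set)))"
    using assms by (intro sets_PiM_I_finite) auto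
  then have "(\<Union>y\<in>?S. PiE K (\<lambda>i. {y i})) \<in> sets (PiM K (\<lambda>_. count_space UNIV))"
    using fin by (intro sets.finite_UN) auto
  then show ?thesis using eq by simp
qed

lemma indep_blocks:
  assumes K1: "\<And>k. k \<in> S \<Longrightarrow> K k \<subseteq> {1..}" and Kf: "\<And>k. k \<in> S \<Longrightarrow> finite (K k)"
    and disj: "disjoint_family_on K S"
    and loc: "\<And>k f g. k \<in> S \<Longrightarrow> (\<And>i. i \<in> K k \<Longrightarrow> f i = g i) \<Longrightarrow> Q k f = Q k g"
  shows "indep_events (\<lambda>k. {\<omega> \<in> space M. Q k (\<lambda>i. Z i \<omega>)}) S"
proof -
  have iv: "indep_vars (\<lambda>k. PiM (K k) (\<lambda>_. count_space UNIV)) (\<lambda>k \<omega>. restrict (\<lambda>i. Z i \<omega>) (K k)) S"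
    by (rule indep_vars_restrict[OF Zind K1 disj])
  have ie: "indep_events (\<lambda>k. {\<omega> \<in> space M. Q k (restrict (\<lambda>i. Z i \<omega>) (K k))}) S"
    by (rule indep_eventsI_indep_vars[OF iv]) (rule finite_PiM_sets[OF Kf])
  have eqs: "{\<omega> \<in> space M. Q k (restrict (\<lambda>i. Z i \<omega>) (K k))} = {\<omega> \<in> space M. Q k (\<lambda>i. Z i \<omega>)}"
    if k: "k \<in> S" for k
  proof (rule Collect_cong)
    fix \<omega>
    have "Q k (restrict (\<lambda>i. Z i \<omega>) (K k)) = Q k (\<lambda>i. Z i \<omega>)"
      by (rule loc[OF k]) simp
    then show "(\<omega> \<in> space M \<and> Q k (restrict (\<lambda>i. Z i \<omega>) (K k))) = (\<omega> \<in> space M \<and> Q k (\<lambda>i. Z i \<omega>))"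
      by simp
  qed
  have "indep_sets (\<lambda>k. {{\<omega> \<in> space M. Q k (restrict (\<lambda>i. Z i \<omega>) (K k))}}) S
      = indep_sets (\<lambda>k. {{\<omega> \<in> space M. Q k (\<lambda>i. Z i \<omega>)}}) S"
    by (rule indep_sets_cong) (simp_all only: eqs)
  then show ?thesis using ie unfolding indep_events_def_alt by simp
qed

lemma Zmeas: "i \<ge> 1 \<Longrightarrow> Z i \<in> measurable M (count_space UNIV)"
  using Zind by (auto simp: indep_vars_def)

lemma event_local:
  assumes fin: "finite K" and K1: "K \<subseteq> {1..}" and loc: "\<And>f g. (\<And>i. i \<in> K \<Longrightarrow> f i = g i) \<Longrightarrow> Q f = Q g"
  shows "{\<omega> \<in> space M. Q (\<lambda>i. Z i \<omega>)} \<in> events"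
proof -
  have "indep_events (\<lambda>k. {\<omega> \<in> space M. (\<lambda>_. Q) k (\<lambda>i. Z i \<omega>)}) {()}"
  proof (rule indep_blocks[where K="\<lambda>_. K"])
    show "\<And>k. k \<in> {()} \<Longrightarrow> K \<subseteq> {1..}" using K1 by blast
    show "\<And>k. k \<in> {()} \<Longrightarrow> finite K" using fin by blast
    show "disjoint_family_on (\<lambda>_. K) {()}" by (simp add: disjoint_family_on_def)
    show "\<And>k f g. k \<in> {()} \<Longrightarrow> (\<And>i. i \<in> K \<Longrightarrow> f i = g i) \<Longrightarrow> Q f = Q g" by (rule loc)
  qed
  then show ?thesis by (simp add: indep_events_def)
qed

end

definition altf :: "(nat \<Rightarrow> bool) \<Rightarrow> nat \<Rightarrow> nat \<Rightarrow> bool" where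
  "altf f m L = (\<forall>j\<in>{m<..m+L}. f (j-1) \<noteq> f j)"

lemma altf_iff: "altf f m L \<longleftrightarrow> (\<exists>b. \<forall>d\<in>{0..L}. f (m+d) = (b \<noteq> odd d))"
proof
  assume a: "altf f m L"
  have "d \<le> L \<longrightarrow> f (m+d) = (f m \<noteq> odd d)" for d
  proof (induction d)
    case 0 then show ?case by simp
  next
    case (Suc d)
    show ?case
    proof
      assume sd: "Suc d \<le> L"
      then have "Suc (m+d) \<in> {m<..m+L}" by simp
      with a have "f (Suc (m+d) - 1) \<noteq> f (Suc (m+d))" unfolding altf_def by blast
      then have ne: "f (m+d) \<noteq> f (Suc (m+d))" by simp
      have "f (m+d) = (f m \<noteq> odd d)" using Suc.IH sd by simp
      with ne show "f (m + Suc d) = (f m \<noteq> odd (Suc d))" by auto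
    qed
  qed
  then show "\<exists>b. \<forall>d\<in>{0..L}. f (m+d) = (b \<noteq> odd d)" by auto
next
  assume "\<exists>b. \<forall>d\<in>{0..L}. f (m+d) = (b \<noteq> odd d)"
  then obtain b where b: "\<And>d. d \<in> {0..L} \<Longrightarrow> f (m+d) = (b \<noteq> odd d)" by blast
  show "altf f m L" unfolding altf_def
  proof
    fix j assume j: "j \<in> {m<..m+L}"
    define d where "d = j - m - 1"
    have d: "j = m + Suc d" "Suc d \<le> L" using j by (auto simp: d_def)
    have e1: "f (m + d) = (b \<noteq> odd d)" by (rule b) (use d in simp)
    have e2: "f (m + Suc d) = (b \<noteq> odd (Suc d))" by (rule b) (use d in simp)
    have "j - 1 = m + d" using d by simp
    then show "f (j-1) \<noteq> f j" using e1 e2 d(1) by simp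
  qed
qed

context sw begin

definition sig :: real where "sig = sqrt (p * (1 - p))"

definition rr :: "bool \<Rightarrow> real" where "rr c = (if c then p else 1 - p)"

lemma sig_pos: "0 < sig" and sig_half: "sig \<le> 1/2" and sig_sq: "sig^2 = p * (1-p)"
proof -
  show "0 < sig" using p0 p1 by (simp add: sig_def)
  show "sig^2 = p * (1-p)" using p0 p1 by (simp add: sig_def)
  have "0 \<le> (p - 1/2)^2" by simp
  then have "p * (1-p) \<le> (1/2)^2" by (simp add: power2_eq_square algebra_simps)
  then have "sig^2 \<le> (1/2)^2" using p0 p1 by (simp add: sig_def)
  then show "sig \<le> 1/2" by (rule power2_le_imp_le) simp
qed

lemma prob_pattern:
  assumes fin: "finite I" and I1: "I \<subseteq> {1..}"
  shows "prob {\<omega> \<in> space M. \<forall>i\<in>I. Z i \<omega> = c i} = (\<Prod>i\<in>I. rr (c i))"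
proof (cases "I = {}")
  case True then show ?thesis by (simp add: prob_space)
next
  case False
  have ie: "indep_events (\<lambda>i. {\<omega> \<in> space M. (\<lambda>i x. x = c i) i (Z i \<omega>)}) {1..}"
    by (rule indep_eventsI_indep_vars[OF Zind]) auto
  have "prob (\<Inter>i\<in>I. {\<omega> \<in> space M. Z i \<omega> = c i}) = (\<Prod>i\<in>I. prob {\<omega> \<in> space M. Z i \<omega> = c i})"
    by (rule ie[unfolded indep_events_def, THEN conjunct2, rule_format]) (use False fin I1 in auto)
  moreover have "(\<Inter>i\<in>I. {\<omega> \<in> space M. Z i \<omega> = c i}) = {\<omega> \<in> space M. \<forall>i\<in>I. Z i \<omega> = c i}"
    using False by auto
  moreover have "prob {\<omega> \<in> space M. Z i \<omega> = c i} = rr (c i)" if "i \<in> I" for i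
  proof -
    have i1: "i \<ge> 1" using that I1 by auto
    have ev: "{\<omega> \<in> space M. X i \<omega> = 1} \<in> events" using Xmeas[OF i1] by measurable
    show ?thesis
    proof (cases "c i")
      case True then show ?thesis using P1[OF i1] by (simp add: Z_def rr_def)
    next
      case False
      have "{\<omega> \<in> space M. Z i \<omega> = c i} = space M - {\<omega> \<in> space M. X i \<omega> = 1}"
        using False by (auto simp: Z_def)
      then show ?thesis using False prob_compl[OF ev] P1[OF i1] by (simp add: rr_def)
    qed
  qed
  ultimately show ?thesis by simp
qed

definition Bset :: "nat \<Rightarrow> nat \<Rightarrow> 'a set" where
  "Bset m L = {\<omega> \<in> space M. altf (\<lambda>i. Z i \<omega>) m L}"

definition ss :: "nat \<Rightarrow> real" where
  "ss L = (\<Sum>b\<in>UNIV. \<Prod>d\<in>{0..L}. rr (b \<noteq> odd d))"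

lemma ss_step: "ss (Suc (Suc L)) = p * (1-p) * ss L"
proof -
  have h: "(\<Prod>d\<in>{0..Suc (Suc L)}. rr (b \<noteq> odd d)) = p * (1-p) * (\<Prod>d\<in>{0..L}. rr (b \<noteq> odd d))" for b
  proof -
    have "(\<Prod>d\<in>{0..Suc (Suc L)}. rr (b \<noteq> odd d)) = (\<Prod>d\<in>{0..L}. rr (b \<noteq> odd d)) * (rr (b \<noteq> odd (Suc L)) * rr (b \<noteq> odd (Suc (Suc L))))"
      by (simp only: prod.atLeast0_atMost_Suc mult.assoc)
    moreover have "rr (b \<noteq> odd (Suc L)) * rr (b \<noteq> odd (Suc (Suc L))) = p * (1-p)"
      by (cases b; cases "odd L") (auto simp: rr_def)
    ultimately show ?thesis by simp
  qed
  show ?thesis by (simp only: ss_def h sum_distrib_left)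
qed

lemma ss_bound: "ss L \<le> sig ^ L"
proof -
  have s0: "ss 0 = 1" by (simp add: ss_def rr_def UNIV_bool)
  have s1: "ss 1 = 2 * (p * (1-p))" by (simp add: ss_def rr_def UNIV_bool prod.atLeast0_atMost_Suc)
  have "sig * (2 * sig) \<le> sig * 1" using sig_half sig_pos by (intro mult_left_mono) auto
  then have "2 * (p * (1-p)) \<le> sig" using sig_sq by (simp add: power2_eq_square algebra_simps)
  then have s1': "ss 1 \<le> sig" using s1 by simp
  have "ss L \<le> sig ^ L \<and> ss (Suc L) \<le> sig ^ Suc L"
  proof (induction L)
    case 0 then show ?case using s0 s1' by simp
  next
    case (Suc L)
    have "ss (Suc (Suc L)) = sig^2 * ss L" using ss_step sig_sq by simp
    also have "\<dots> \<le> sig^2 * sig^L" using Suc by (intro mult_left_mono) auto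
    finally show ?case using Suc by (simp add: power_add[symmetric] algebra_simps)
  qed
  then show ?thesis by simp
qed

lemma prob_Bset: assumes "m \<ge> 1" shows "prob (Bset m L) \<le> sig ^ L"
proof -
  let ?A = "\<lambda>b. {\<omega> \<in> space M. \<forall>i\<in>{m..m+L}. Z i \<omega> = (b \<noteq> odd (i - m))}"
  have eq: "Bset m L = ?A True \<union> ?A False"
  proof -
    have "altf f m L \<longleftrightarrow> (\<exists>b. \<forall>i\<in>{m..m+L}. f i = (b \<noteq> odd (i - m)))" for f
    proof -
      have "(\<forall>d\<in>{0..L}. f (m+d) = (b \<noteq> odd d)) \<longleftrightarrow> (\<forall>i\<in>{m..m+L}. f i = (b \<noteq> odd (i - m)))" for b
      proof
        assume h: "\<forall>d\<in>{0..L}. f (m+d) = (b \<noteq> odd d)"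
        show "\<forall>i\<in>{m..m+L}. f i = (b \<noteq> odd (i - m))"
        proof
          fix i assume i: "i \<in> {m..m+L}"
          then have "i - m \<in> {0..L}" "m + (i - m) = i" by auto
          then show "f i = (b \<noteq> odd (i - m))" using h by metis
        qed
      next
        assume h: "\<forall>i\<in>{m..m+L}. f i = (b \<noteq> odd (i - m))"
        show "\<forall>d\<in>{0..L}. f (m+d) = (b \<noteq> odd d)"
        proof
          fix d assume d: "d \<in> {0..L}"
          then have "m + d \<in> {m..m+L}" "m + d - m = d" by auto
          then show "f (m+d) = (b \<noteq> odd d)" using h by metis
        qed
      qed
      then show ?thesis using altf_iff[of f m L] by simp
    qed
    then show ?thesis unfolding Bset_def by (auto simp: ex_bool_eq)
  qed
  have disj: "?A True \<inter> ?A False = {}" by auto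
  have ev: "?A b \<in> events" for b
    by (rule event_local[where K="{m..m+L}"]) (use assms in auto)
  have pA: "prob (?A b) = (\<Prod>d\<in>{0..L}. rr (b \<noteq> odd d))" for b
  proof -
    have "prob (?A b) = (\<Prod>i\<in>{m..m+L}. rr (b \<noteq> odd (i - m)))"
      by (rule prob_pattern) (use assms in auto)
    also have "\<dots> = (\<Prod>d\<in>{0..L}. rr (b \<noteq> odd d))"
      using prod.shift_bounds_cl_nat_ivl[of "\<lambda>i. rr (b \<noteq> odd (i - m))" 0 m L] by (simp add: add.commute)
    finally show ?thesis .
  qed
  have "prob (Bset m L) = prob (?A True) + prob (?A False)"
    unfolding eq by (rule finite_measure_Union[OF ev ev disj])
  also have "\<dots> = ss L" unfolding ss_def pA by (simp add: UNIV_bool)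
  finally show ?thesis using ss_bound by simp
qed

end

lemma altf_local:
  assumes "\<And>i. m \<le> i \<Longrightarrow> i \<le> m + L \<Longrightarrow> f i = g i"
  shows "altf f m L = altf g m L"
proof -
  have "\<forall>j\<in>{m<..m+L}. f (j-1) = g (j-1) \<and> f j = g j" using assms by auto
  then show ?thesis unfolding altf_def by auto
qed

context sw begin

definition Cset :: "nat \<Rightarrow> nat \<Rightarrow> nat \<Rightarrow> 'a set" where
  "Cset a t L = {\<omega> \<in> space M. \<forall>m. a \<le> m \<and> m < a + t \<longrightarrow> \<not> altf (\<lambda>i. Z i \<omega>) m L}"

lemma Cset_local:
  assumes "\<And>i. i \<in> {a..<a+t+L} \<Longrightarrow> f i = g i"
  shows "(\<forall>m. a \<le> m \<and> m < a + t \<longrightarrow> \<not> altf f m L) = (\<forall>m. a \<le> m \<and> m < a + t \<longrightarrow> \<not> altf g m L)"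
proof -
  have "altf f m L = altf g m L" if "a \<le> m" "m < a + t" for m
    by (rule altf_local) (use assms that in auto)
  then show ?thesis by blast
qed

lemma Cset_ev: assumes "a \<ge> 1" shows "Cset a t L \<in> events"
  unfolding Cset_def
proof (rule event_local[where K="{a..<a+t+L}"])
  show "finite {a..<a+t+L}" by simp
  show "{a..<a+t+L} \<subseteq> {1..}" using assms by auto
  fix f g :: "nat \<Rightarrow> bool" assume "\<And>i. i \<in> {a..<a+t+L} \<Longrightarrow> f i = g i"
  then show "(\<forall>m. a \<le> m \<and> m < a + t \<longrightarrow> \<not> altf f m L) = (\<forall>m. a \<le> m \<and> m < a + t \<longrightarrow> \<not> altf g m L)"
    by (rule Cset_local)
qed

lemma Bset_ev: assumes "m \<ge> 1" shows "Bset m L \<in> events"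
  unfolding Bset_def
proof (rule event_local[where K="{m..m+L}"])
  show "finite {m..m+L}" by simp
  show "{m..m+L} \<subseteq> {1..}" using assms by auto
  fix f g :: "nat \<Rightarrow> bool" assume "\<And>i. i \<in> {m..m+L} \<Longrightarrow> f i = g i"
  then show "altf f m L = altf g m L" by (intro altf_local) auto
qed

lemma Cset_Suc: "Cset a (Suc t) L = Cset a t L - Bset (a+t) L"
  unfolding Cset_def Bset_def by (auto simp: less_Suc_eq)

lemma Cset_mono: "t' \<le> t \<Longrightarrow> Cset a t L \<subseteq> Cset a t' L"
  unfolding Cset_def by auto

lemma Cset_0: "Cset a 0 L = space M"
  unfolding Cset_def by auto

lemma indep_CB:
  assumes a1: "a \<ge> 1" and Lt: "L \<le> t"
  shows "prob (Cset a (t-L) L \<inter> Bset (a+t) L) = prob (Cset a (t-L) L) * prob (Bset (a+t) L)"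
proof -
  define K where "K = (\<lambda>b::bool. if b then {a..<a+t} else {a+t..a+t+L})"
  define Q where "Q = (\<lambda>(b::bool) f. if b then (\<forall>m. a \<le> m \<and> m < a + (t-L) \<longrightarrow> \<not> altf f m L) else altf f (a+t) L)"
  have ie: "indep_events (\<lambda>b. {\<omega> \<in> space M. Q b (\<lambda>i. Z i \<omega>)}) UNIV"
  proof (rule indep_blocks)
    show "\<And>k. k \<in> UNIV \<Longrightarrow> K k \<subseteq> {1..}" using a1 by (auto simp: K_def)
    show "\<And>k. k \<in> UNIV \<Longrightarrow> finite (K k)" by (auto simp: K_def)
    show "disjoint_family_on K UNIV" by (auto simp: K_def disjoint_family_on_def)
    fix k :: bool and f g :: "nat \<Rightarrow> bool" assume "k \<in> UNIV" and fg: "\<And>i. i \<in> K k \<Longrightarrow> f i = g i"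
    show "Q k f = Q k g"
    proof (cases k)
      case True
      have "(\<forall>m. a \<le> m \<and> m < a + (t-L) \<longrightarrow> \<not> altf f m L) = (\<forall>m. a \<le> m \<and> m < a + (t-L) \<longrightarrow> \<not> altf g m L)"
        by (rule Cset_local) (use fg True Lt in \<open>auto simp: K_def\<close>)
      then show ?thesis using True by (simp add: Q_def)
    next
      case False
      have "altf f (a+t) L = altf g (a+t) L"
        by (rule altf_local) (use fg False in \<open>auto simp: K_def\<close>)
      then show ?thesis using False by (simp add: Q_def)
    qed
  qed
  have A1: "{\<omega> \<in> space M. Q True (\<lambda>i. Z i \<omega>)} = Cset a (t-L) L" by (simp add: Q_def Cset_def)
  have A2: "{\<omega> \<in> space M. Q False (\<lambda>i. Z i \<omega>)} = Bset (a+t) L" by (simp add: Q_def Bset_def)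
  have "prob (\<Inter>b\<in>UNIV. {\<omega> \<in> space M. Q b (\<lambda>i. Z i \<omega>)}) = (\<Prod>b\<in>UNIV. prob {\<omega> \<in> space M. Q b (\<lambda>i. Z i \<omega>)})"
    by (rule ie[unfolded indep_events_def, THEN conjunct2, rule_format]) auto
  then show ?thesis unfolding UNIV_bool using A1 A2 by (simp add: Int_commute mult.commute)
qed

lemma lll:
  assumes a1: "a \<ge> 1" and x0: "0 \<le> x" and x1: "x < 1" and cond: "sig ^ L \<le> x * (1-x)^L"
  shows "prob (Cset a t L) \<ge> (1-x)^t"
proof -
  define c where "c t = prob (Cset a t L)" for t
  have c0: "c 0 = 1" by (simp add: c_def Cset_0 prob_space)
  have cnn: "c t \<ge> 0" for t by (simp add: c_def)
  have step: "c (Suc t) \<ge> (1-x) * c t" for t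
  proof (induction t rule: less_induct)
    case (less t)
    have chain: "d \<le> t \<longrightarrow> c t \<ge> (1-x)^d * c (t-d)" for d
    proof (induction d)
      case 0 then show ?case by simp
    next
      case (Suc d)
      show ?case
      proof
        assume sd: "Suc d \<le> t"
        have ih: "c t \<ge> (1-x)^d * c (t-d)" using Suc sd by simp
        have "c (Suc (t - Suc d)) \<ge> (1-x) * c (t - Suc d)" by (rule less.IH) (use sd in simp)
        moreover have "Suc (t - Suc d) = t - d" using sd by simp
        ultimately have "c (t-d) \<ge> (1-x) * c (t - Suc d)" by simp
        then have "(1-x)^d * c (t-d) \<ge> (1-x)^d * ((1-x) * c (t - Suc d))"
          using x1 by (intro mult_left_mono) auto
        with ih show "c t \<ge> (1-x)^(Suc d) * c (t - Suc d)" by (simp add: algebra_simps)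
      qed
    qed
    have ct: "c t \<ge> (1-x)^L * c (t-L)"
    proof (cases "L \<le> t")
      case True then show ?thesis using chain[of L] by simp
    next
      case False
      have "c t \<ge> (1-x)^t * c 0" using chain[of t] by simp
      moreover have "(1-x)^L \<le> (1-x)^t" using False x0 x1 by (intro power_decreasing) auto
      ultimately show ?thesis using False c0 by simp
    qed
    have Bev: "Bset (a+t) L \<in> events" using a1 by (intro Bset_ev) simp
    have Cev: "Cset a t L \<in> events" using a1 by (rule Cset_ev)
    have PB: "prob (Bset (a+t) L) \<le> sig ^ L" using a1 by (intro prob_Bset) simp
    have diff: "c t - c (Suc t) = prob (Cset a t L \<inter> Bset (a+t) L)"
      unfolding c_def Cset_Suc using finite_measure_Diff'[OF Cev Bev] by simp
    have "prob (Cset a t L \<inter> Bset (a+t) L) \<le> sig^L * c (t-L)"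
    proof (cases "L \<le> t")
      case True
      have "prob (Cset a t L \<inter> Bset (a+t) L) \<le> prob (Cset a (t-L) L \<inter> Bset (a+t) L)"
        using Cset_mono[of "t-L" t a L] a1 Cset_ev[OF a1, of "t-L" L] Bev by (intro finite_measure_mono) auto
      also have "\<dots> = c (t-L) * prob (Bset (a+t) L)" using indep_CB[OF a1 True] by (simp add: c_def)
      also have "\<dots> \<le> c (t-L) * sig^L" using PB cnn by (intro mult_left_mono) auto
      finally show ?thesis by (simp add: mult.commute)
    next
      case False
      have "prob (Cset a t L \<inter> Bset (a+t) L) \<le> prob (Bset (a+t) L)"
        using Bev by (intro finite_measure_mono) auto
      then show ?thesis using PB False c0 by simp
    qed
    also have "\<dots> \<le> x * (1-x)^L * c (t-L)" using cond cnn by (intro mult_right_mono) auto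
    also have "\<dots> \<le> x * c t" using ct x0 by (simp add: mult.assoc mult_left_mono)
    finally have "c t - c (Suc t) \<le> x * c t" using diff by simp
    then show ?case by (simp add: algebra_simps)
  qed
  have "c t \<ge> (1-x)^t" for t
  proof (induction t)
    case 0 then show ?case using c0 by simp
  next
    case (Suc t)
    have "(1-x)^Suc t = (1-x) * (1-x)^t" by simp
    also have "\<dots> \<le> (1-x) * c t" using Suc x1 by (intro mult_left_mono) auto
    also have "\<dots> \<le> c (Suc t)" by (rule step)
    finally show ?case .
  qed
  then show ?thesis by (simp add: c_def)
qed

end

locale nm =
  fixes lam eps :: real
  assumes lam2: "2 \<le> lam" and eps0: "0 < eps"
begin

definition Nn :: "nat \<Rightarrow> nat" where
  "Nn L = nat \<lceil>lam powr (real L - 1 - eps/2) * ln (real L)\<rceil>"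

definition yy :: "nat \<Rightarrow> real" where
  "yy L = lam powr (real L - 1 - eps/2) * ln (real L)"

definition cc :: real where "cc = lam powr (-1 - eps/2)"

definition kap :: real where "kap = 2 powr (min eps 1 / 4)"

definition xx :: "nat \<Rightarrow> real" where "xx L = kap * (1/lam)^L"

definition ff :: "nat \<Rightarrow> real" where
  "ff N = log lam (real N) - log lam (log lam (log lam (real N))) + log lam (log lam (exp 1)) + 1 + eps"

lemma lam_pos: "0 < lam" and lam1: "1 < lam" and lnlam: "0 < ln lam"
  using lam2 by auto

lemma yy_form: "yy L = cc * lam ^ L * ln (real L)"
proof -
  have e: "real L - 1 - eps/2 = real L + (-1 - eps/2)" by simp
  have "lam powr (real L - 1 - eps/2) = lam powr (real L) * lam powr (-1 - eps/2)"
    unfolding e by (rule powr_add)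
  then show ?thesis unfolding yy_def cc_def using lam_pos by (simp add: powr_realpow)
qed

lemma cc_pos: "0 < cc" using lam_pos by (simp add: cc_def)

lemma cc_le: "cc \<le> 2 powr (-1 - eps/2)"
  unfolding cc_def using eps0 lam2 by (intro powr_mono2') auto

lemma two_powr_half: "2 powr (-1 - eps/2) \<le> 1/2"
proof -
  have "2 powr (-1 - eps/2) \<le> 2 powr (-1::real)" using eps0 by (intro powr_mono) auto
  then show ?thesis by (simp add: powr_minus_divide)
qed

lemma cc_half: "cc \<le> 1/2" using cc_le two_powr_half by linarith

lemma kap_gt1: "1 < kap" using eps0 by (simp add: kap_def)

lemma kap_sq: "kap^2 = 2 powr (min eps 1 / 2)"
  by (simp add: kap_def power2_eq_square powr_add[symmetric])

lemma kap_sq_le: "kap^2 \<le> 2"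
proof -
  have "2 powr (min eps 1 / 2) \<le> 2 powr (1::real)" by (intro powr_mono) auto
  then show ?thesis using kap_sq by simp
qed

lemma kap_le2: "kap \<le> 2"
  using kap_sq_le kap_gt1 by (smt (verit) power2_eq_square mult_le_cancel_left1)

lemma kap_cc: "kap^2 * cc \<le> 1/2"
proof -
  have ee: "min eps 1 / 2 - 1 - eps/2 = min eps 1 / 2 + (- 1 - eps/2)" by simp
  have "kap^2 * cc = 2 powr (min eps 1 / 2) * cc" using kap_sq by simp
  also have "\<dots> \<le> 2 powr (min eps 1 / 2) * 2 powr (-1 - eps/2)"
    using cc_le by (intro mult_left_mono) auto
  also have "\<dots> = 2 powr (min eps 1 / 2 - 1 - eps/2)" unfolding ee by (rule powr_add[symmetric])
  also have "\<dots> \<le> 2 powr (-1::real)" by (intro powr_mono) auto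
  also have "\<dots> = 1/2" by (simp add: powr_minus_divide)
  finally show ?thesis .
qed

definition del0 :: real where "del0 = min cc ((kap - 1) / (2 * kap))"

lemma del0_pos: "0 < del0" using cc_pos kap_gt1 by (simp add: del0_def)

definition BB :: real where "BB = lam powr (eps/2)"

lemma BB_gt1: "1 < BB" using lam1 eps0 by (simp add: BB_def)

definition good :: "nat \<Rightarrow> bool" where
  "good L \<longleftrightarrow> real L / lam ^ L \<le> del0 \<and> 1 \<le> ln (real L) \<and> ln 2 / (BB - 1) \<le> ln (real L) \<and> 3 + eps \<le> real L"

lemma eventually_good: "eventually good sequentially"
proof -
  have "(\<lambda>L. real L / lam ^ L) \<longlonglongrightarrow> 0" using lim_n_over_pown[of lam] lam1 by simp
  then have e1: "eventually (\<lambda>L. real L / lam ^ L < del0) sequentially"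
    using del0_pos by (rule order_tendstoD)
  have lnt: "filterlim (\<lambda>L. ln (real L)) at_top sequentially"
    by (rule filterlim_compose[OF ln_at_top filterlim_real_sequentially])
  have "\<forall>Z. eventually (\<lambda>L. Z \<le> ln (real L)) sequentially"
    using lnt by (simp add: filterlim_at_top)
  then have e2: "eventually (\<lambda>L. max 1 (ln 2 / (BB - 1)) \<le> ln (real L)) sequentially"
    by blast
  have e3: "eventually (\<lambda>L. 3 + eps \<le> real L) sequentially"
    using filterlim_real_sequentially by (simp add: filterlim_at_top)
  show ?thesis using e1 e2 e3 by eventually_elim (auto simp: good_def)
qed


lemma good_L: "good L \<Longrightarrow> 3 \<le> real L" using eps0 by (simp add: good_def)

lemma Nn_bounds:
  assumes "1 \<le> L"
  shows "0 \<le> yy L" "yy L \<le> real (Nn L)" "real (Nn L) \<le> yy L + 1"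
proof -
  have "0 \<le> ln (real L)" using assms by simp
  then show y0: "0 \<le> yy L" unfolding yy_def by simp
  have c0: "0 \<le> \<lceil>yy L\<rceil>" using y0 by simp
  have e: "real (Nn L) = real_of_int \<lceil>yy L\<rceil>" unfolding Nn_def yy_def[symmetric] using c0 by simp
  show "yy L \<le> real (Nn L)" unfolding e by (rule le_of_int_ceiling)
  show "real (Nn L) \<le> yy L + 1" unfolding e by (rule of_int_ceiling_le_add_one)
qed

lemma yy_mono:
  assumes "1 \<le> L" "L \<le> L'"
  shows "yy L \<le> yy L'"
proof -
  have "lam powr (real L - 1 - eps/2) \<le> lam powr (real L' - 1 - eps/2)"
    using assms lam1 by (intro powr_mono) auto
  moreover have "ln (real L) \<le> ln (real L')" using assms by simp
  moreover have "0 \<le> ln (real L)" using assms by simp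
  ultimately show ?thesis unfolding yy_def by (intro mult_mono) auto
qed

lemma Nn_mono:
  assumes "1 \<le> L" "L \<le> L'"
  shows "Nn L \<le> Nn L'"
  unfolding Nn_def yy_def[symmetric] using yy_mono[OF assms] by (intro nat_mono ceiling_mono)

lemma good_N2:
  assumes "good L" shows "real L \<le> yy L" "L \<le> Nn L"
proof -
  have g: "real L / lam ^ L \<le> del0" "1 \<le> ln (real L)" using assms by (auto simp: good_def)
  have lp: "0 < lam ^ L" using lam_pos by simp
  have "real L / lam ^ L \<le> cc" using g(1) by (simp add: del0_def)
  then have "real L \<le> cc * lam ^ L" using lp by (simp add: divide_le_eq)
  also have "\<dots> = cc * lam ^ L * 1" by simp
  also have "\<dots> \<le> cc * lam ^ L * ln (real L)" using g(2) cc_pos lp by (intro mult_left_mono) auto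
  finally show "real L \<le> yy L" by (simp add: yy_form)
  then show "L \<le> Nn L" using Nn_bounds(2)[of L] good_L[OF assms] by simp
qed

lemma good_N4:
  assumes "good L"
  shows "0 \<le> xx L" "xx L \<le> 1/2" "2 * xx L \<le> kap - 1" "(1/lam)^L \<le> xx L * (1 - xx L)^L"
proof -
  define w where "w = real L / lam ^ L"
  have lp: "0 < lam ^ L" using lam_pos by simp
  have L3: "3 \<le> real L" using good_L[OF assms] .
  have w: "w \<le> (kap - 1) / (2 * kap)" using assms by (simp add: good_def del0_def w_def)
  have "(1/lam)^L = 1 / lam^L" by (simp add: power_one_over)
  also have "\<dots> \<le> real L / lam^L" using L3 lp by (intro divide_right_mono) auto
  finally have u: "(1/lam)^L \<le> w" unfolding w_def .
  have u0: "0 \<le> (1/lam)^L" using lam_pos by simp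
  show x0: "0 \<le> xx L" unfolding xx_def using kap_gt1 u0 by simp
  have "xx L \<le> kap * w" unfolding xx_def using u kap_gt1 by (intro mult_left_mono) auto
  also have "\<dots> \<le> kap * ((kap - 1) / (2 * kap))" using w kap_gt1 by (intro mult_left_mono) auto
  also have "\<dots> = (kap - 1) / 2" using kap_gt1 by (simp add: field_simps)
  finally have x1: "xx L \<le> (kap - 1) / 2" .
  then show "2 * xx L \<le> kap - 1" by simp
  show "xx L \<le> 1/2" using x1 kap_le2 by simp
  have Lx: "real L * xx L \<le> (kap - 1) / 2"
  proof -
    have "real L * xx L = kap * w" unfolding xx_def w_def by (simp add: power_one_over)
    also have "\<dots> \<le> kap * ((kap - 1) / (2 * kap))" using w kap_gt1 by (intro mult_left_mono) auto
    also have "\<dots> = (kap - 1) / 2" using kap_gt1 by (simp add: field_simps)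
    finally show ?thesis .
  qed
  have "(kap - 1) / 2 \<le> (kap - 1) / kap" using kap_gt1 kap_le2 by (intro divide_left_mono) auto
  with Lx have Lx': "real L * xx L \<le> (kap - 1) / kap" by linarith
  have "1 + real L * (- xx L) \<le> (1 + (- xx L))^L"
    by (rule Bernoulli_inequality) (use x1 kap_le2 in simp)
  then have b: "1 - real L * xx L \<le> (1 - xx L)^L" by simp
  have "1 - (kap - 1) / kap = 1 / kap" using kap_gt1 by (simp add: field_simps)
  then have "1 / kap \<le> 1 - real L * xx L" using Lx' by linarith
  with b have b2: "1 / kap \<le> (1 - xx L)^L" by linarith
  have "(1/lam)^L = xx L * (1 / kap)" unfolding xx_def using kap_gt1 by simp
  also have "\<dots> \<le> xx L * (1 - xx L)^L" using b2 x0 by (intro mult_left_mono) auto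
  finally show "(1/lam)^L \<le> xx L * (1 - xx L)^L" .
qed

lemma good_N5:
  assumes "good L"
  shows "exp (-1) / sqrt (real L) \<le> (1 - xx L) ^ (Nn L + 1)"
proof -
  note x = good_N4[OF assms]
  have L3: "3 \<le> real L" using good_L[OF assms] .
  define n where "n = Nn L + 1"
  define x where "x = xx L"
  have x0: "0 \<le> x" and xh: "x \<le> 1/2" and xk: "2 * x \<le> kap - 1" using x by (auto simp: x_def)
  have n0: "0 \<le> real n" by simp
  have nb: "real n \<le> yy L + 2" using Nn_bounds(3)[of L] L3 by (simp add: n_def)
  have lnb: "- x - 2 * x^2 \<le> ln (1 - x)" by (rule ln_one_minus_pos_lower_bound[OF x0 xh])
  have "- x - 2 * x^2 = - (x * (1 + 2 * x))" by (simp add: power2_eq_square algebra_simps)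
  also have "\<dots> \<ge> - (x * kap)" using xk x0 by (simp add: mult_left_mono)
  finally have lnb2: "- (x * kap) \<le> ln (1 - x)" using lnb by linarith
  have pw: "(1 - x) ^ n = exp (real n * ln (1 - x))" using xh by (simp add: exp_of_nat_mult[symmetric] ln_realpow[symmetric])
  have ul: "lam ^ L * (1/lam)^L = 1" using lam_pos by (simp add: power_one_over)
  have u4: "(1/lam)^L \<le> 1/4"
  proof -
    have "(1/lam)^L \<le> (1/2)^L" using lam2 by (intro power_mono) (auto simp: divide_le_eq)
    also have "\<dots> \<le> (1/2)^2" using L3 by (intro power_decreasing) auto
    finally show ?thesis by (simp add: power2_eq_square)
  qed
  have "real n * (x * kap) \<le> (yy L + 2) * (x * kap)" using nb x0 kap_gt1 by (intro mult_right_mono) auto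
  also have "\<dots> = kap^2 * cc * ln (real L) * (lam ^ L * (1/lam)^L) + 2 * kap^2 * (1/lam)^L"
    unfolding yy_form x_def xx_def by (simp add: power2_eq_square algebra_simps)
  also have "\<dots> = kap^2 * cc * ln (real L) + 2 * kap^2 * (1/lam)^L" using ul by simp
  also have "\<dots> \<le> 1/2 * ln (real L) + 2 * 2 * (1/4)"
  proof -
    have h1: "kap^2 * cc * ln (real L) \<le> 1/2 * ln (real L)"
      using L3 by (intro mult_right_mono[OF kap_cc]) simp
    have "kap^2 * (1/lam)^L \<le> 2 * (1/4)"
      by (rule mult_mono[OF kap_sq_le u4]) (use lam_pos in auto)
    with h1 show ?thesis by simp
  qed
  finally have "real n * (x * kap) \<le> 1/2 * ln (real L) + 1" by simp
  moreover have "real n * ln (1 - x) \<ge> real n * (- (x * kap))" using lnb2 n0 by (intro mult_left_mono) auto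
  ultimately have ex: "- (1/2 * ln (real L) + 1) \<le> real n * ln (1 - x)" by simp
  have "exp (-1) / sqrt (real L) = exp (- (1/2 * ln (real L) + 1))"
  proof -
    have "sqrt (real L) = exp (1/2 * ln (real L))" using L3 by (simp add: powr_half_sqrt[symmetric] powr_def)
    then show ?thesis by (simp add: exp_diff[symmetric] exp_minus_inverse field_simps exp_add[symmetric] exp_minus)
  qed
  also have "\<dots> \<le> exp (real n * ln (1 - x))" using ex by simp
  finally show ?thesis using pw by (simp add: n_def x_def)
qed


lemma good_N3:
  assumes "good L"
  shows "real L \<le> ff (Nn L)"
proof -
  define A where "A = ln lam"
  have A0: "0 < A" using lnlam by (simp add: A_def)
  have g: "real L / lam ^ L \<le> del0" "1 \<le> ln (real L)" "ln 2 / (BB - 1) \<le> ln (real L)" "3 + eps \<le> real L"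
    using assms by (auto simp: good_def)
  have L3: "3 \<le> real L" using g(4) eps0 by simp
  define N where "N = real (Nn L)"
  define e where "e = real L - 1 - eps/2"
  have yN: "yy L \<le> N" "N \<le> yy L + 1" using Nn_bounds[of L] L3 by (auto simp: N_def)
  have lnL0: "0 < ln (real L)" using g(2) by simp
  have ypos: "0 < yy L" unfolding yy_def using lam_pos lnL0 by simp
  have Npos: "0 < N" using ypos yN by simp
  have lny: "ln (yy L) = e * A + ln (ln (real L))"
    unfolding yy_def e_def A_def using lam_pos lnL0 by (simp add: ln_mult)
  define v where "v = ln N / A"
  have v_lo: "e + ln (ln (real L)) / A \<le> v"
  proof -
    have "ln (yy L) \<le> ln N" using yN ypos by simp
    then have "e * A + ln (ln (real L)) \<le> ln N" using lny by simp
    then have "(e * A + ln (ln (real L))) / A \<le> ln N / A" using A0 by (intro divide_right_mono) auto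
    moreover have "(e * A + ln (ln (real L))) / A = e + ln (ln (real L)) / A" using A0 by (simp add: field_simps)
    ultimately show ?thesis unfolding v_def by simp
  qed
  have lnlnL: "0 \<le> ln (ln (real L))" using g(2) by simp
  have v1: "1 < v"
  proof -
    have "e \<ge> 2" unfolding e_def using g(4) eps0 by simp
    moreover have "0 \<le> ln (ln (real L)) / A" using lnlnL A0 by simp
    ultimately show ?thesis using v_lo by linarith
  qed
  have Llam: "real L \<le> lam ^ L"
  proof -
    have "real L / lam ^ L \<le> 1" using g(1) cc_half by (simp add: del0_def)
    then show ?thesis using lam_pos by (simp add: divide_le_eq)
  qed
  have N_up: "N \<le> lam ^ L * real L"
  proof -
    have "ln (real L) \<le> real L" using ln_le_minus_one[of "real L"] L3 by simp
    then have "yy L \<le> 1/2 * lam ^ L * real L"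
      unfolding yy_form using cc_half cc_pos lam_pos lnL0 by (intro mult_mono) auto
    moreover have "1 \<le> 1/2 * lam ^ L * real L"
    proof -
      have "1 \<le> lam ^ L" using lam1 by simp
      then have "1 * 3 \<le> lam ^ L * real L" using L3 by (intro mult_mono) auto
      then show ?thesis by simp
    qed
    ultimately show ?thesis using yN by simp
  qed
  have v_up: "v \<le> 2 * real L"
  proof -
    have "ln N \<le> ln (lam ^ L * real L)" using N_up Npos by simp
    also have "\<dots> = real L * A + ln (real L)" using lam_pos L3 by (simp add: ln_mult ln_realpow A_def)
    also have "ln (real L) \<le> real L * A"
    proof -
      have "ln (real L) \<le> ln (lam ^ L)" using Llam L3 by simp
      then show ?thesis by (simp add: ln_realpow A_def)
    qed
    finally have "ln N \<le> 2 * real L * A" by (simp add: algebra_simps)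
    then have "ln N / A \<le> 2 * real L * A / A" using A0 by (intro divide_right_mono) auto
    then show ?thesis unfolding v_def using A0 by simp
  qed
  have lnv: "ln v \<le> BB * ln (real L)"
  proof -
    have "ln v \<le> ln (2 * real L)" using v_up v1 by simp
    also have "\<dots> = ln 2 + ln (real L)" using L3 by (simp add: ln_mult)
    also have "ln 2 \<le> (BB - 1) * ln (real L)" using g(3) BB_gt1 by (simp add: divide_le_eq mult.commute)
    finally show ?thesis by (simp add: algebra_simps)
  qed
  have lnv0: "0 < ln v" using v1 by simp
  have lnlnv: "ln (ln v) \<le> eps / 2 * A + ln (ln (real L))"
  proof -
    have "ln (ln v) \<le> ln (BB * ln (real L))" using lnv lnv0 by simp
    also have "\<dots> = ln BB + ln (ln (real L))" using BB_gt1 lnL0 by (simp add: ln_mult)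
    also have "ln BB = eps / 2 * A" unfolding BB_def A_def by simp
    finally show ?thesis .
  qed
  have ffN: "ff (Nn L) = v - ln (ln v) / A + 1 + eps"
  proof -
    have a: "log lam (real (Nn L)) = v" unfolding v_def A_def N_def by (simp add: log_def)
    have b: "log lam (log lam v) = (ln (ln v) - ln A) / A"
      unfolding log_def A_def[symmetric] using lnv0 A0 by (simp add: ln_div)
    have c: "log lam (log lam (exp 1)) = - ln A / A"
      unfolding log_def A_def[symmetric] using A0 by (simp add: ln_div)
    show ?thesis unfolding ff_def a b c by (simp add: diff_divide_distrib)
  qed
  have "ln (ln v) / A \<le> (eps / 2 * A + ln (ln (real L))) / A"
    using lnlnv A0 by (intro divide_right_mono) auto
  also have "\<dots> = eps / 2 + ln (ln (real L)) / A" using A0 by (simp add: add_divide_distrib)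
  finally have "ln (ln v) / A \<le> eps / 2 + ln (ln (real L)) / A" .
  then show ?thesis unfolding ffN using v_lo by (simp add: e_def)
qed

lemma pow2_bound: "7 \<le> g \<Longrightarrow> 2 * (real g ^ 2 + 2) \<le> 2 ^ g"
proof (induction g rule: dec_induct)
  case base then show ?case by simp
next
  case (step g)
  have "0 \<le> (real g - 1)^2" by simp
  then have sq: "2 * real g \<le> real g * real g + 1" by (simp add: power2_eq_square algebra_simps)
  have "2 * (real (Suc g) ^ 2 + 2) \<le> 2 * (2 * (real g ^ 2 + 2))"
    using sq by (simp add: power2_eq_square algebra_simps)
  also have "\<dots> \<le> 2 * 2 ^ g" using step(3) by simp
  finally show ?case by simp
qed

lemma N6:
  assumes g7: "7 \<le> g"
  shows "real (Nn ((g - 1)^2) + 1) * (1/lam)^(g^2) \<le> (1/2)^g"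
proof -
  obtain h where g: "g = Suc h" using g7 by (cases g) auto
  define L' where "L' = (g - 1)^2"
  define m where "m = 2 * h + 1"
  have L'h: "L' = h * h" unfolding L'_def g by (simp add: power2_eq_square)
  have L'1: "1 \<le> L'" using g7 g L'h by (cases h) auto
  have gL: "g^2 = L' + m" unfolding L'h m_def g by (simp add: power2_eq_square)
  have lp: "0 < lam ^ L'" using lam_pos by simp
  have "real (Nn L') + 1 \<le> yy L' + 2" using Nn_bounds(3)[OF L'1] by simp
  also have "yy L' \<le> lam ^ L' * real L'"
  proof -
    have "ln (real L') \<le> real L'" using ln_le_minus_one[of "real L'"] L'1 by simp
    moreover have "0 \<le> ln (real L')" using L'1 by simp
    moreover have "cc \<le> 1" using cc_half by simp
    ultimately have "cc * lam ^ L' * ln (real L') \<le> 1 * lam ^ L' * real L'"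
      using lp cc_pos by (intro mult_mono) auto
    then show ?thesis by (simp add: yy_form)
  qed
  also have "2 \<le> lam ^ L' * 2" using lam1 by simp
  finally have h1: "real (Nn L') + 1 \<le> lam ^ L' * (real L' + 2)" by (simp add: algebra_simps)
  have ul: "lam ^ L' * (1/lam)^L' = 1" using lam_pos by (simp add: power_one_over)
  have "real (Nn L' + 1) * (1/lam)^(g^2) \<le> lam ^ L' * (real L' + 2) * (1/lam)^(g^2)"
    using h1 lam_pos by (intro mult_right_mono) auto
  also have "\<dots> = (lam ^ L' * (1/lam)^L') * ((real L' + 2) * (1/lam)^m)"
    unfolding gL power_add by (simp only: mult_ac)
  also have "\<dots> = (real L' + 2) * (1/lam)^m" using ul by simp
  also have "\<dots> \<le> (real g ^ 2 + 2) * (1/2)^m"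
  proof (rule mult_mono)
    have "real h * real h \<le> (1 + real h) * (1 + real h)" by (intro mult_mono) auto
    then show "real L' + 2 \<le> real g ^ 2 + 2" unfolding L'h g by (simp add: power2_eq_square)
    show "(1/lam)^m \<le> (1/2)^m" using lam2 by (intro power_mono) (auto simp: divide_le_eq)
  qed (use lam_pos in auto)
  also have "(1/2::real)^m = 2 * ((1/2)^g * (1/2)^g)"
  proof -
    have "(1/2::real)^g * (1/2)^g = (1/2)^(m + 1)" unfolding m_def g by (simp add: power_add[symmetric] mult_2)
    then show ?thesis by simp
  qed
  also have "(real g ^ 2 + 2) * (2 * ((1/2)^g * (1/2)^g)) = 2 * (real g ^ 2 + 2) * (1/2)^g * (1/2)^g"
    by simp
  also have "\<dots> \<le> 2 ^ g * (1/2)^g * (1/2)^g"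
    using pow2_bound[OF g7] by (intro mult_right_mono) auto
  also have "\<dots> = (1/2)^g" by (simp add: power_one_over)
  finally show ?thesis unfolding L'_def .
qed

end

lemma sum_all_one:
  fixes t :: "nat \<Rightarrow> real"
  assumes fin: "finite A" and le: "\<And>j. j \<in> A \<Longrightarrow> t j \<le> 1" and s: "sum t A = real (card A)" and j: "j \<in> A"
  shows "t j = 1"
proof (rule ccontr)
  assume "t j \<noteq> 1"
  then have "t j < 1" using le[OF j] by simp
  then have "sum t A < sum (\<lambda>_. 1) A" by (intro sum_strict_mono_ex1[OF fin]) (use le j in auto)
  then show False using s by simp
qed

lemma MN_lt:
  fixes X :: "nat \<Rightarrow> 'a \<Rightarrow> real"
  assumes N1: "1 \<le> N" and bin: "\<And>i. 1 \<le> i \<Longrightarrow> X i \<omega> = 0 \<or> X i \<omega> = 1"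
    and noalt: "\<And>m. 1 \<le> m \<Longrightarrow> m + L \<le> N + 1 \<Longrightarrow> \<not> altf (\<lambda>i. X i \<omega> = 1) m L"
  shows "M_N X N \<omega> < L"
proof -
  define S where "S = {n - 1 | n. 1 \<le> n \<and> n \<le> N \<and> in_H X N 1 n \<omega>}"
  have MS: "M_N X N \<omega> = Max S" unfolding S_def M_N_def longest_switch_def by simp
  have finS: "finite S"
  proof (rule finite_subset)
    show "S \<subseteq> (\<lambda>n. n - 1) ` {1..N}" unfolding S_def by auto
  qed simp
  have "in_H X N 1 1 \<omega>" unfolding in_H_def switches_def by (rule bexI[of _ 1]) (use N1 in auto)
  then have "0 \<in> S" unfolding S_def using N1 by force
  then have neS: "S \<noteq> {}" by auto
  have "\<forall>s\<in>S. s < L"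
  proof
    fix s assume "s \<in> S"
    then obtain n where n: "s = n - 1" "1 \<le> n" "n \<le> N" "in_H X N 1 n \<omega>" unfolding S_def by blast
    then obtain i where i: "i \<in> {1..1+N-n+1}" and sw: "switches X n i \<omega> = real n - 1"
      unfolding in_H_def by blast
    show "s < L"
    proof (rule ccontr)
      assume "\<not> s < L"
      then have Ln: "L \<le> n - 1" using n by simp
      define t where "t j = (1 - X (j-1) \<omega>) * X j \<omega> + X (j-1) \<omega> * (1 - X j \<omega>)" for j
      define A where "A = {i+1..n+i-1}"
      have cardA: "card A = n - 1" unfolding A_def using n(2) by simp
      have tb: "t j \<le> 1 \<and> (t j = 1 \<longrightarrow> (X (j-1) \<omega> = 1) \<noteq> (X j \<omega> = 1))" if "j \<in> A" for j
      proof -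
        have "1 \<le> j - 1" "1 \<le> j" using that i unfolding A_def by auto
        then have "X (j-1) \<omega> = 0 \<or> X (j-1) \<omega> = 1" "X j \<omega> = 0 \<or> X j \<omega> = 1" using bin by auto
        then show ?thesis unfolding t_def by auto
      qed
      have sumA: "sum t A = real (card A)"
        using sw n(2) unfolding switches_def t_def[symmetric] A_def[symmetric] cardA by simp
      have all1: "t j = 1" if "j \<in> A" for j
        by (rule sum_all_one[OF _ _ sumA that]) (use tb in \<open>auto simp: A_def\<close>)
      have "altf (\<lambda>i. X i \<omega> = 1) i L"
        unfolding altf_def
      proof
        fix j assume "j \<in> {i<..i+L}"
        then have "j \<in> A" unfolding A_def using Ln n(2) by auto
        then show "(X (j-1) \<omega> = 1) \<noteq> (X j \<omega> = 1)" using tb all1 by blast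
      qed
      moreover have "1 \<le> i" "i + L \<le> N + 1" using i Ln n by auto
      ultimately show False using noalt by blast
    qed
  qed
  then show ?thesis unfolding MS using finS neS by simp
qed

lemma harmonic_tail_unbounded:
  fixes n c :: nat and B :: real
  shows "\<exists>m\<ge>n. B \<le> (\<Sum>k\<in>{n..m}. 1 / real (k + c + 1))"
proof (rule ccontr)
  assume nx: "\<not> ?thesis"
  have bd: "(\<Sum>k\<in>{n..m}. 1 / real (k + c + 1)) < B" if mn: "m \<ge> n" for m
  proof (rule ccontr)
    assume "\<not> (\<Sum>k\<in>{n..m}. 1 / real (k + c + 1)) < B"
    then have Bm: "B \<le> (\<Sum>k\<in>{n..m}. 1 / real (k + c + 1))" by linarith
    have "\<exists>m\<ge>n. B \<le> (\<Sum>k\<in>{n..m}. 1 / real (k + c + 1))"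
    proof (intro exI conjI)
      show "n \<le> m" by (rule mn)
      show "B \<le> (\<Sum>k\<in>{n..m}. 1 / real (k + c + 1))" by (rule Bm)
    qed
    with nx show False by contradiction
  qed
  define f where "f j = 1 / real (j + (n + c + 1))" for j
  have "summable f"
  proof (rule summableI_nonneg_bounded[where x = B])
    show "0 \<le> f j" for j by (simp add: f_def)
    fix m
    show "sum f {..<m} \<le> B"
    proof (cases m)
      case 0
      have "0 \<le> (\<Sum>k\<in>{n..n}. 1 / real (k + c + 1))" by (intro sum_nonneg) simp
      with bd[of n] have "0 < B" by linarith
      then show ?thesis using 0 by simp
    next
      case (Suc m')
      have "sum f {..<m} = (\<Sum>k\<in>{n..n+m'}. 1 / real (k + c + 1))"
      proof -
        have "sum f {..<m} = (\<Sum>j\<in>{0..m'}. 1 / real (j + n + c + 1))"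
          unfolding f_def Suc by (intro sum.cong) (auto simp: add.assoc)
        also have "\<dots> = (\<Sum>k\<in>{n..n+m'}. 1 / real (k + c + 1))"
          using sum.shift_bounds_cl_nat_ivl[of "\<lambda>k. 1 / real (k + c + 1)" 0 n m'] by (simp add: add.commute add.left_commute)
        finally show ?thesis .
      qed
      then show ?thesis using bd[of "n+m'"] by simp
    qed
  qed
  then have "summable (\<lambda>j. 1 / real j)"
    unfolding f_def using summable_iff_shift[of "\<lambda>j. 1 / real j" "n + c + 1"] by simp
  then show False using not_summable_harmonic[where 'a=real] by (simp add: inverse_eq_divide)
qed

locale sw2 = sw +
  fixes eps :: real
  assumes eps0: "0 < eps"
begin

lemma lam_ge2: "2 \<le> 1 / sig"
  using sig_half sig_pos by (simp add: le_divide_eq mult.commute)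

sublocale N: nm "1/sig" eps
  by unfold_locales (use lam_ge2 eps0 in auto)

lemma pow_sig: "(1 / (1 / sig)) ^ L = sig ^ L" by simp

lemma main: "AE \<omega> in M. infinite {N::nat. int (M_N X N \<omega>) < \<lfloor>N.ff N\<rfloor>}"
proof -
  obtain L0 where L0: "\<And>L. L \<ge> L0 \<Longrightarrow> N.good L"
    using N.eventually_good unfolding eventually_sequentially by blast
  define k0 where "k0 = max L0 7"
  define Lk where "Lk k = (k + k0)^2" for k
  define Nk where "Nk k = N.Nn (Lk k)" for k
  define ak where "ak k = N.Nn ((k + k0 - 1)^2) + 2" for k
  define tk where "tk k = Nk k + 2 - Lk k - ak k" for k
  define E where "E k = Cset (ak k) (tk k) (Lk k)" for k
  define F where "F k = Cset 1 (ak k - 1) (Lk k)" for k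
  have g7: "7 \<le> k + k0" for k by (simp add: k0_def)
  have good: "N.good (Lk k)" for k
  proof -
    have "k + k0 \<le> (k + k0)^2" by (simp add: power2_eq_square)
    then show ?thesis unfolding Lk_def by (intro L0) (simp add: k0_def)
  qed
  have ak2: "2 \<le> ak k" for k by (simp add: ak_def)
  have Ev: "E k \<in> events" for k unfolding E_def using ak2[of k] by (intro Cset_ev) simp
  have Fv: "F k \<in> events" for k unfolding F_def by (intro Cset_ev) simp
  have LN: "Lk k \<le> Nk k" for k unfolding Nk_def by (rule N.good_N2(2)[OF good])
  have Lk_ge: "k \<le> Lk k" for k
  proof -
    have "k \<le> k + k0" by simp
    also have "\<dots> \<le> (k + k0)^2" by (simp add: power2_eq_square)
    finally show ?thesis by (simp add: Lk_def)
  qed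

  have PF: "prob (space M - F k) \<le> (1/2)^(k + k0)" for k
  proof -
    have sub: "space M - F k \<subseteq> (\<Union>m\<in>{1..<ak k}. Bset m (Lk k))"
    proof
      fix \<omega> assume "\<omega> \<in> space M - F k"
      then obtain m where "1 \<le> m" "m < 1 + (ak k - 1)" "altf (\<lambda>i. Z i \<omega>) m (Lk k)" "\<omega> \<in> space M"
        unfolding F_def Cset_def by blast
      moreover have "1 + (ak k - 1) = ak k" using ak2[of k] by simp
      ultimately show "\<omega> \<in> (\<Union>m\<in>{1..<ak k}. Bset m (Lk k))" unfolding Bset_def by auto
    qed
    have "prob (space M - F k) \<le> prob (\<Union>m\<in>{1..<ak k}. Bset m (Lk k))"
      using sub by (intro finite_measure_mono) (auto intro!: Bset_ev)
    also have "\<dots> \<le> (\<Sum>m\<in>{1..<ak k}. prob (Bset m (Lk k)))"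
      by (intro finite_measure_subadditive_finite) (auto intro!: Bset_ev)
    also have "\<dots> \<le> (\<Sum>m\<in>{1..<ak k}. sig ^ Lk k)"
      by (intro sum_mono prob_Bset) auto
    also have "\<dots> = real (N.Nn ((k + k0 - 1)^2) + 1) * sig ^ ((k + k0)^2)"
      by (simp add: ak_def Lk_def)
    also have "\<dots> \<le> (1/2)^(k + k0)"
      using N.N6[OF g7[of k]] by simp
    finally show ?thesis .
  qed

  have AEF: "AE \<omega> in M. eventually (\<lambda>k. \<omega> \<in> F k) sequentially"
  proof -
    have summ: "summable (\<lambda>k. measure M (space M - F k))"
    proof (rule summable_comparison_test')
      show "summable (\<lambda>k. (1/2::real)^k)" by (rule summable_geometric) simp
      fix k :: nat
      have "prob (space M - F k) \<le> (1/2)^(k + k0)" by (rule PF)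
      also have "(1/2::real)^(k + k0) \<le> (1/2)^k" by (intro power_decreasing) auto
      finally show "norm (measure M (space M - F k)) \<le> (1/2)^k" by simp
    qed
    have "AE \<omega> in M. eventually (\<lambda>k. \<omega> \<in> space M - (space M - F k)) sequentially"
      by (rule borel_cantelli_AE1) (use Fv summ in \<open>auto simp: less_top[symmetric]\<close>)
    then show ?thesis
    proof (rule AE_mp[OF _ AE_I2], intro impI)
      fix \<omega> assume "\<omega> \<in> space M" and ev: "eventually (\<lambda>k. \<omega> \<in> space M - (space M - F k)) sequentially"
      show "eventually (\<lambda>k. \<omega> \<in> F k) sequentially" using ev by (rule eventually_mono) auto
    qed
  qed
  have PE: "exp (-1) / real (k + k0) \<le> prob (E k)" for k
  proof -
    define x where "x = N.xx (Lk k)"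
    note n4 = N.good_N4[OF good[of k], folded x_def]
    have x0: "0 \<le> x" and xh: "x \<le> 1/2" and cond: "sig ^ Lk k \<le> x * (1 - x) ^ Lk k"
      using n4 by simp_all
    have "(1 - x) ^ tk k \<le> prob (E k)"
      unfolding E_def by (rule lll) (use ak2[of k] x0 xh cond in auto)
    moreover have "(1 - x) ^ (Nk k + 1) \<le> (1 - x) ^ tk k"
      using x0 xh ak2[of k] by (intro power_decreasing) (auto simp: tk_def)
    moreover have "exp (-1) / sqrt (real (Lk k)) \<le> (1 - x) ^ (Nk k + 1)"
      using N.good_N5[OF good[of k]] by (simp add: x_def Nk_def)
    moreover have "sqrt (real (Lk k)) = real (k + k0)" by (simp add: Lk_def)
    ultimately show ?thesis by simp
  qed

  have disj_lt: "Nk k + 2 \<le> ak k'" if "k < k'" for k k'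
  proof -
    have "(k + k0)^2 \<le> (k' + k0 - 1)^2" using that by (intro power_mono) auto
    moreover have "1 \<le> (k + k0)^2" using g7[of k] by (simp add: power2_eq_square)
    ultimately have "N.Nn ((k + k0)^2) \<le> N.Nn ((k' + k0 - 1)^2)" by (rule N.Nn_mono[rotated])
    then show ?thesis by (simp add: Nk_def Lk_def ak_def)
  qed
  have indep: "indep_events (\<lambda>k. space M - E k) UNIV"
  proof -
    define K where "K k = {ak k..<Nk k + 2}" for k
    define Q where "Q k f = (\<not> (\<forall>m. ak k \<le> m \<and> m < ak k + tk k \<longrightarrow> \<not> altf f m (Lk k)))" for k f
    have ie: "indep_events (\<lambda>k. {\<omega> \<in> space M. Q k (\<lambda>i. Z i \<omega>)}) UNIV"
    proof (rule indep_blocks)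
      show "K k \<subseteq> {1..}" for k using ak2[of k] by (auto simp: K_def)
      show "finite (K k)" for k by (simp add: K_def)
      show "disjoint_family_on K UNIV"
        unfolding disjoint_family_on_def
      proof (intro ballI impI)
        fix k k' :: nat assume "k \<noteq> k'"
        then consider "k < k'" | "k' < k" by linarith
        then show "K k \<inter> K k' = {}"
          by cases (use disj_lt in \<open>fastforce simp: K_def\<close>)+
      qed
      fix k and f g :: "nat \<Rightarrow> bool" assume fg: "\<And>i. i \<in> K k \<Longrightarrow> f i = g i"
      show "Q k f = Q k g"
      proof (cases "tk k = 0")
        case True then show ?thesis by (auto simp: Q_def)
      next
        case False
        then have eq: "ak k + tk k + Lk k = Nk k + 2" by (simp add: tk_def)
        have "(\<forall>m. ak k \<le> m \<and> m < ak k + tk k \<longrightarrow> \<not> altf f m (Lk k)) = (\<forall>m. ak k \<le> m \<and> m < ak k + tk k \<longrightarrow> \<not> altf g m (Lk k))"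
          by (rule Cset_local) (use fg eq in \<open>auto simp: K_def\<close>)
        then show ?thesis by (simp add: Q_def)
      qed
    qed
    have "{\<omega> \<in> space M. Q k (\<lambda>i. Z i \<omega>)} = space M - E k" for k
      unfolding Q_def E_def Cset_def by auto
    then show ?thesis using ie by simp
  qed

  have prodf: "prob (\<Inter>k\<in>{n..m}. space M - E k) = (\<Prod>k\<in>{n..m}. 1 - prob (E k))" if "n \<le> m" for n m
  proof -
    have "prob (\<Inter>k\<in>{n..m}. space M - E k) = (\<Prod>k\<in>{n..m}. prob (space M - E k))"
      by (rule indep[unfolded indep_events_def, THEN conjunct2, rule_format]) (use that in auto)
    also have "\<dots> = (\<Prod>k\<in>{n..m}. 1 - prob (E k))"
      by (intro prod.cong refl prob_compl Ev)
    finally show ?thesis .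
  qed

  have PU: "prob (\<Union>k\<in>{n..}. E k) = 1" for n
  proof -
    define U where "U = (\<Union>k\<in>{n..}. E k)"
    have Uv: "U \<in> events" unfolding U_def using Ev by auto
    have bnd: "prob (space M - U) \<le> exp (- (exp (-1) * B))" for B
    proof -
      obtain m where mn: "m \<ge> n" and Bm: "B \<le> (\<Sum>k\<in>{n..m}. 1 / real (k + (k0 - 1) + 1))"
        using harmonic_tail_unbounded by blast
      have k0e: "k + (k0 - 1) + 1 = k + k0" for k using g7[of 0] by simp
      have "prob (space M - U) \<le> prob (\<Inter>k\<in>{n..m}. space M - E k)"
        using mn Ev by (intro finite_measure_mono) (auto simp: U_def)
      also have "\<dots> = (\<Prod>k\<in>{n..m}. 1 - prob (E k))" by (rule prodf[OF mn])
      also have "\<dots> \<le> (\<Prod>k\<in>{n..m}. exp (- (exp (-1) / real (k + k0))))"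
      proof (intro prod_mono conjI)
        fix k
        show "0 \<le> 1 - prob (E k)" by simp
        have "1 - prob (E k) \<le> exp (- prob (E k))" using exp_ge_add_one_self[of "- prob (E k)"] by simp
        also have "\<dots> \<le> exp (- (exp (-1) / real (k + k0)))" using PE[of k] by simp
        finally show "1 - prob (E k) \<le> exp (- (exp (-1) / real (k + k0)))" .
      qed
      also have "\<dots> = exp (- (exp (-1) * (\<Sum>k\<in>{n..m}. 1 / real (k + k0))))"
        by (simp add: exp_sum[symmetric] sum_negf sum_distrib_left)
      also have "\<dots> \<le> exp (- (exp (-1) * B))"
      proof -
        have "(\<Sum>k\<in>{n..m}. 1 / real (k + (k0 - 1) + 1)) = (\<Sum>k\<in>{n..m}. 1 / real (k + k0))"
          by (simp only: k0e)
        then show ?thesis using Bm by simp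
      qed
      finally show ?thesis .
    qed
    have "prob (space M - U) = 0"
    proof (rule ccontr)
      assume ne: "prob (space M - U) \<noteq> 0"
      define q where "q = prob (space M - U)"
      have q0: "0 < q" using ne by (simp add: q_def zero_less_measure_iff)
      have "q \<le> exp (- (exp (-1) * (exp 1 * (1 - ln q))))" using bnd unfolding q_def by blast
      also have "exp (-1) * (exp 1 * (1 - ln q)) = 1 - ln q" by (simp add: exp_minus field_simps)
      also have "exp (- (1 - ln q)) = q / exp 1" using q0 by (simp add: exp_diff)
      finally have "q \<le> q / exp 1" .
      moreover have "q / exp 1 < q" using q0 by (simp add: divide_less_eq)
      ultimately show False by simp
    qed
    then have "prob U = 1" using prob_compl[OF Uv] by simp
    then show ?thesis by (simp add: U_def)
  qed
  have AEE: "AE \<omega> in M. \<forall>n. \<omega> \<in> (\<Union>k\<in>{n..}. E k)"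
  proof -
    have "AE \<omega> in M. \<omega> \<in> (\<Union>k\<in>{n..}. E k)" for n
      using PU[of n] Ev by (subst prob_eq_1[symmetric]) auto
    then show ?thesis by (simp add: AE_all_countable)
  qed

  have AEbin: "AE \<omega> in M. \<forall>i. 1 \<le> i \<longrightarrow> X i \<omega> = 0 \<or> X i \<omega> = 1"
  proof -
    have "AE \<omega> in M. 1 \<le> i \<longrightarrow> X i \<omega> = 0 \<or> X i \<omega> = 1" for i
    proof (cases "1 \<le> i")
      case False then show ?thesis by simp
    next
      case True
      have m: "X i \<in> borel_measurable M" by (rule Xmeas[OF True])
      have e0: "{\<omega> \<in> space M. X i \<omega> = 0} \<in> events" using m by measurable
      have e1: "{\<omega> \<in> space M. X i \<omega> = 1} \<in> events" using m by measurable
      have "prob ({\<omega> \<in> space M. X i \<omega> = 0} \<union> {\<omega> \<in> space M. X i \<omega> = 1})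
          = prob {\<omega> \<in> space M. X i \<omega> = 0} + prob {\<omega> \<in> space M. X i \<omega> = 1}"
        by (rule finite_measure_Union[OF e0 e1]) auto
      also have "\<dots> = 1" using P0[OF True] P1[OF True] by simp
      moreover have "{\<omega> \<in> space M. X i \<omega> = 0} \<union> {\<omega> \<in> space M. X i \<omega> = 1} = {\<omega> \<in> space M. X i \<omega> = 0 \<or> X i \<omega> = 1}"
        by blast
      ultimately have "prob {\<omega> \<in> space M. X i \<omega> = 0 \<or> X i \<omega> = 1} = 1" by simp
      then have "AE \<omega> in M. \<omega> \<in> {\<omega> \<in> space M. X i \<omega> = 0 \<or> X i \<omega> = 1}"
        using e0 e1 by (subst prob_eq_1[symmetric]) auto
      then show ?thesis by (rule AE_mp) (auto intro!: AE_I2)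
    qed
    then show ?thesis by (simp add: AE_all_countable)
  qed
  show ?thesis
    using AEbin AEE AEF
  proof eventually_elim
    case (elim \<omega>)
    have bin: "\<And>i. 1 \<le> i \<Longrightarrow> X i \<omega> = 0 \<or> X i \<omega> = 1" using elim(1) by blast
    obtain n0 where n0: "\<And>k. k \<ge> n0 \<Longrightarrow> \<omega> \<in> F k"
      using elim(3) unfolding eventually_sequentially by blast
    have Zeq: "(\<lambda>i. Z i \<omega>) = (\<lambda>i. X i \<omega> = 1)" by (simp add: Z_def[abs_def])
    show ?case unfolding infinite_nat_iff_unbounded_le
    proof
      fix B
      have "\<omega> \<in> (\<Union>k\<in>{max n0 B..}. E k)" using elim(2) by simp
      then obtain k where k: "k \<ge> max n0 B" and kE: "\<omega> \<in> E k" by auto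
      have kF: "\<omega> \<in> F k" using n0 k by simp
      have "B \<le> Nk k" using k Lk_ge[of k] LN[of k] by simp
      moreover have "int (M_N X (Nk k) \<omega>) < \<lfloor>N.ff (Nk k)\<rfloor>"
      proof -
        have MN: "M_N X (Nk k) \<omega> < Lk k"
        proof (rule MN_lt)
          have "1 \<le> Lk k" using g7[of k] by (simp add: Lk_def power2_eq_square)
          then show "1 \<le> Nk k" using LN[of k] by simp
          show "\<And>i. 1 \<le> i \<Longrightarrow> X i \<omega> = 0 \<or> X i \<omega> = 1" by (rule bin)
          fix m assume m1: "1 \<le> m" and mL: "m + Lk k \<le> Nk k + 1"
          show "\<not> altf (\<lambda>i. X i \<omega> = 1) m (Lk k)"
          proof (cases "m < ak k")
            case True
            then have "m < 1 + (ak k - 1)" using ak2[of k] by simp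
            have "\<forall>m'. 1 \<le> m' \<and> m' < 1 + (ak k - 1) \<longrightarrow> \<not> altf (\<lambda>i. Z i \<omega>) m' (Lk k)"
              using kF by (simp add: F_def Cset_def)
            then have "\<not> altf (\<lambda>i. Z i \<omega>) m (Lk k)" using m1 \<open>m < 1 + (ak k - 1)\<close> by simp
            then show ?thesis by (simp add: Zeq)
          next
            case False
            then have "ak k \<le> m" "m < ak k + tk k" using mL by (auto simp: tk_def)
            moreover have "\<forall>m'. ak k \<le> m' \<and> m' < ak k + tk k \<longrightarrow> \<not> altf (\<lambda>i. Z i \<omega>) m' (Lk k)"
              using kE by (simp add: E_def Cset_def)
            ultimately have "\<not> altf (\<lambda>i. Z i \<omega>) m (Lk k)" by simp
            then show ?thesis by (simp add: Zeq)
          qed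
        qed
        have "real (Lk k) \<le> N.ff (Nk k)" unfolding Nk_def by (rule N.good_N3[OF good])
        then have "int (Lk k) \<le> \<lfloor>N.ff (Nk k)\<rfloor>" by (simp add: le_floor_iff)
        then show ?thesis using MN by linarith
      qed
      ultimately show "\<exists>N\<ge>B. N \<in> {N. int (M_N X N \<omega>) < \<lfloor>N.ff N\<rfloor>}"
        by (intro exI[of _ "Nk k"]) simp
    qed
  qed
qed

end

theorem theorem2p3:
  fixes M :: "'a measure" and X :: "nat \<Rightarrow> 'a \<Rightarrow> real" and p q lam eps :: real
  assumes "prob_space M"
    and "0 < p" and "p < 1" and "q = 1 - p"
    and "\<And>i. i \<ge> 1 \<Longrightarrow> X i \<in> borel_measurable M"
    and "prob_space.indep_vars M (\<lambda>_. borel) X {1..}"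
    and "\<And>i. i \<ge> 1 \<Longrightarrow> measure M {\<omega> \<in> space M. X i \<omega> = 1} = p"
    and "\<And>i. i \<ge> 1 \<Longrightarrow> measure M {\<omega> \<in> space M. X i \<omega> = 0} = q"
    and "lam = 1 / sqrt (p * q)"
    and "eps > 0"
  shows "AE \<omega> in M. infinite {N :: nat.
           int (M_N X N \<omega>) <
             \<lfloor>log lam (real N) - log lam (log lam (log lam (real N)))
               + log lam (log lam (exp 1)) + 1 + eps\<rfloor>}"
proof -
  interpret sw2 M X p eps
  proof (intro sw2.intro sw.intro sw_axioms.intro sw2_axioms.intro)
    show "prob_space M" by (rule assms(1))
    show "0 < p" "p < 1" by (rule assms(2), rule assms(3))
    show "\<And>i. 1 \<le> i \<Longrightarrow> X i \<in> borel_measurable M" by (rule assms(5))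
    show "prob_space.indep_vars M (\<lambda>_. borel) X {1..}" by (rule assms(6))
    show "\<And>i. 1 \<le> i \<Longrightarrow> measure M {\<omega> \<in> space M. X i \<omega> = 1} = p" by (rule assms(7))
    show "\<And>i. 1 \<le> i \<Longrightarrow> measure M {\<omega> \<in> space M. X i \<omega> = 0} = 1 - p" using assms(8,4) by simp
    show "0 < eps" by (rule assms(10))
  qed
  have lam: "lam = 1 / sig" using assms(9,4) by (simp add: sig_def)
  show ?thesis using main unfolding N.ff_def lam .
qed

end
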